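(* Let $a$ be a complex number which is not a non-zero integer. Then \[ \sum_{n=1}^{\infty}\frac{(-1)^{n-1}}{n^2-a^2}=\frac14\sum_{n=1}^{\infty}\frac{(-1)^{n-1}(10n^2-3n-a^2)}{n(2n-1)(n^2-a^2)\binom{2n}{n}\prod_{j=1}^{n}\bigl(1-a^2/(n+j)^2\bigr)}. \] In particular, \[ \zeta(2)=\frac12\sum_{n=1}^{\infty}\frac{(-1)^{n-1}(10n-3)}{n^2(2n-1)\binom{2n}{n}}. \] *)

theory Defs
  imports "HOL-Analysis.Analysis"
begin

end

theory Submission
  imports Defs
begin

definition DD :: "complex \<Rightarrow> nat \<Rightarrow> nat \<Rightarrow> complex" where
  "DD a n k = (\<Prod>i<Suc n. (of_nat (k+1+i))^2 - a^2)"
definition FF :: "complex \<Rightarrow> nat \<Rightarrow> nat \<Rightarrow> complex" where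
  "FF a n k = (-1)^k * fact n * fact (n+k) * of_nat (2*k+n+2) / (2 * fact (k+1) * DD a n k)"
definition GG :: "complex \<Rightarrow> nat \<Rightarrow> nat \<Rightarrow> complex" where
  "GG a n k = (-1)^k * fact n * fact (n+k) / (2 * fact k * DD a n k)"

lemma factor_nz:
  assumes "\<forall>k::int. k \<noteq> 0 \<longrightarrow> a \<noteq> of_int k" "j > 0"
  shows "(of_nat j :: complex)^2 - a^2 \<noteq> 0"
proof
  assume "(of_nat j :: complex)^2 - a^2 = 0"
  hence "(of_nat j - a) * (of_nat j + a) = 0" by (simp add: power2_eq_square algebra_simps)
  hence "a = of_int (int j) \<or> a = of_int (- int j)" by (auto simp: add_eq_0_iff)
  moreover have "int j \<noteq> 0" "- int j \<noteq> 0" using \<open>j > 0\<close> by auto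
  ultimately show False using assms(1) by blast
qed

lemma DD_nz:
  assumes "\<forall>k::int. k \<noteq> 0 \<longrightarrow> a \<noteq> of_int k"
  shows "DD a n k \<noteq> 0"
proof -
  have "\<And>i. (of_nat (k+1+i)::complex)^2 - a^2 \<noteq> 0" by (rule factor_nz[OF assms]) simp
  then show ?thesis unfolding DD_def by (simp only: prod_zero_iff finite_lessThan) blast
qed

lemma DD_Suc_n: "DD a (Suc n) k = DD a n k * ((of_nat (k+n+2))^2 - a^2)"
  unfolding DD_def by (simp add: algebra_simps)

lemma DD_Suc_k: "DD a (Suc n) k = DD a n (Suc k) * ((of_nat (k+1))^2 - a^2)"
  unfolding DD_def by (subst prod.lessThan_Suc_shift) (simp add: algebra_simps)

lemma WZ:
  assumes "\<forall>k::int. k \<noteq> 0 \<longrightarrow> a \<noteq> of_int k"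
  shows "FF a (Suc n) k - FF a n k = GG a n (Suc k) - GG a n k"
proof -
  define X where "X = (of_nat (k+1))^2 - a^2"
  define Y where "Y = (of_nat (k+n+2))^2 - a^2"
  define D where "D = DD a n k"
  have X: "X \<noteq> 0" unfolding X_def by (rule factor_nz[OF assms]) simp
  have Y: "Y \<noteq> 0" unfolding Y_def by (rule factor_nz[OF assms]) simp
  have D: "D \<noteq> 0" unfolding D_def by (rule DD_nz[OF assms])
  have e1: "DD a (Suc n) k = D * Y" by (simp add: DD_Suc_n D_def Y_def)
  have e2: "DD a n (Suc k) = D * Y / X" using DD_Suc_k[of a n k] X by (simp add: e1 X_def field_simps)
  define fk where "fk = (fact k :: complex)"
  define fn where "fn = (fact n :: complex)"
  define fnk where "fnk = (fact (n+k) :: complex)"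
  define K1 where "K1 = (of_nat (k+1) :: complex)"
  define N1 where "N1 = (of_nat (n+1) :: complex)"
  define NK1 where "NK1 = (of_nat (n+k+1) :: complex)"
  define T2 where "T2 = (of_nat (2*k+n+2) :: complex)"
  define T3 where "T3 = (of_nat (2*k+n+3) :: complex)"
  define s where "s = ((-1)^k :: complex)"
  have nz: "fk \<noteq> 0" "fn \<noteq> 0" "fnk \<noteq> 0" "K1 \<noteq> 0" "N1 \<noteq> 0" "NK1 \<noteq> 0"
    unfolding fk_def fn_def fnk_def K1_def N1_def NK1_def by (simp_all del: of_nat_add of_nat_Suc)
  have r1: "(fact (k+1) :: complex) = K1 * fk" unfolding K1_def fk_def by (simp del: of_nat_add of_nat_Suc)
  have r2: "(fact (Suc n) :: complex) = N1 * fn" unfolding N1_def fn_def by (simp del: of_nat_add of_nat_Suc)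
  have r3: "(fact (Suc n + k) :: complex) = NK1 * fnk" unfolding NK1_def fnk_def by (simp del: of_nat_add of_nat_Suc)
  have r4: "(fact (n + Suc k) :: complex) = NK1 * fnk" unfolding NK1_def fnk_def by (simp del: of_nat_add of_nat_Suc)
  have r5: "(of_nat (2 * k + Suc n + 2) :: complex) = T3" unfolding T3_def by simp
  have r6: "(fact (Suc k) :: complex) = K1 * fk" unfolding K1_def fk_def by (simp del: of_nat_add of_nat_Suc)
  have r7: "(-1::complex) ^ Suc k = - s" unfolding s_def by simp
  define c where "c = s * fn * fnk / (2 * K1 * fk * D * Y)"
  have f1: "FF a (Suc n) k = c * (N1 * NK1 * T3)"
    unfolding FF_def c_def e1 r1 r2 r3 r5 s_def[symmetric] using X Y D nz
    by (simp add: field_simps)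
  have f2: "FF a n k = c * (T2 * Y)"
    unfolding FF_def c_def D_def[symmetric] r1 s_def[symmetric] fn_def[symmetric] fnk_def[symmetric] T2_def[symmetric] using X Y D nz
    by (simp add: field_simps)
  have g1: "GG a n (Suc k) = c * (- NK1 * X)"
    unfolding GG_def c_def e2 r4 r6 r7 fn_def[symmetric] using X Y D nz
    by (simp add: field_simps)
  have g2: "GG a n k = c * (K1 * Y)"
    unfolding GG_def c_def D_def[symmetric] s_def[symmetric] fn_def[symmetric] fnk_def[symmetric] fk_def[symmetric] using X Y D nz
    by (simp add: field_simps)
  have YX: "Y = X + N1 * T3"
    unfolding X_def Y_def N1_def T3_def by (simp add: power2_eq_square algebra_simps)
  have T2: "T2 = NK1 + K1" unfolding T2_def NK1_def K1_def by simp
  have "N1 * NK1 * T3 - T2 * Y = - NK1 * X - K1 * Y"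
    unfolding YX T2 by (simp add: algebra_simps)
  then have "c * (N1 * NK1 * T3 - T2 * Y) = c * (- NK1 * X - K1 * Y)" by simp
  moreover have "FF a (Suc n) k - FF a n k = c * (N1 * NK1 * T3 - T2 * Y)"
    unfolding f1 f2 by (simp only: right_diff_distrib)
  moreover have "GG a n (Suc k) - GG a n k = c * (- NK1 * X - K1 * Y)"
    unfolding g1 g2 by (simp only: right_diff_distrib)
  ultimately show ?thesis by simp
qed

lemma prodfact: "fact k * (\<Prod>i<m. (of_nat (k+1+i) :: complex)) = fact (k+m)"
proof (induction m)
  case 0 then show ?case by simp
next
  case (Suc m)
  have "fact k * (\<Prod>i<Suc m. (of_nat (k+1+i) :: complex)) = (fact k * (\<Prod>i<m. (of_nat (k+1+i) :: complex))) * of_nat (k+1+m)"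
    by (simp only: prod.lessThan_Suc mult.assoc)
  also have "\<dots> = fact (k+m) * of_nat (Suc (k+m))" using Suc.IH by simp
  also have "\<dots> = fact (k + Suc m)" by (simp add: fact_Suc)
  finally show ?case .
qed

lemma prodquot:
  assumes "\<forall>k::int. k \<noteq> 0 \<longrightarrow> a \<noteq> of_int k"
  shows "(\<Prod>j = 1..Suc n. (1 - a^2/(of_nat (Suc n + j))^2)) = DD a n (Suc n) / (fact (2 * Suc n) / fact (Suc n))^2"
proof -
  have "(\<Prod>j = 1..Suc n. (1 - a^2/(of_nat (Suc n + j))^2)) = (\<Prod>i<Suc n. (1 - a^2/(of_nat (Suc n + 1 + i))^2))"
    using prod.atLeast1_atMost_eq[of "\<lambda>j. (1 - a^2/(of_nat (Suc n + j))^2)" "Suc n"] by simp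
  also have "\<dots> = (\<Prod>i<Suc n. ((of_nat (Suc n + 1 + i))^2 - a^2) / (of_nat (Suc n + 1 + i))^2)"
    by (rule prod.cong) (simp_all add: field_simps del: of_nat_add of_nat_Suc)
  also have "\<dots> = DD a n (Suc n) / (\<Prod>i<Suc n. (of_nat (Suc n + 1 + i) :: complex))^2"
    unfolding DD_def by (simp only: prod_dividef prod_power_distrib)
  also have "(\<Prod>i<Suc n. (of_nat (Suc n + 1 + i) :: complex)) = fact (2 * Suc n) / fact (Suc n)"
  proof -
    have "fact (Suc n) * (\<Prod>i<Suc n. (of_nat (Suc n + 1 + i) :: complex)) = fact (2 * Suc n)"
      using prodfact[of "Suc n" "Suc n"] by (simp only: mult_2)
    then show ?thesis by (simp add: field_simps del: fact_Suc)
  qed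
  finally show ?thesis .
qed

lemma diag:
  assumes A: "\<forall>k::int. k \<noteq> 0 \<longrightarrow> a \<noteq> of_int k"
  shows "FF a n n + GG a n (Suc n) = 1/4 * ((-1) ^ (Suc n - 1) * (10 * of_nat (Suc n) ^ 2 - 3 * of_nat (Suc n) - a ^ 2) /
            (of_nat (Suc n) * (2 * of_nat (Suc n) - 1) * (of_nat (Suc n) ^ 2 - a ^ 2) * of_nat ((2 * Suc n) choose (Suc n))
             * (\<Prod>j = 1..Suc n. (1 - a ^ 2 / (of_nat (Suc n + j)) ^ 2))))"
proof -
  define N1 where "N1 = (of_nat (Suc n) :: complex)"
  define X where "X = N1^2 - a^2"
  define Y where "Y = (of_nat (n+n+2))^2 - a^2"
  define E where "E = DD a (Suc n) n"
  define P where "P = 10 * N1 ^ 2 - 3 * N1 - a ^ 2"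
  have X: "X \<noteq> 0" unfolding X_def N1_def by (rule factor_nz[OF A]) simp
  have Y: "Y \<noteq> 0" unfolding Y_def by (rule factor_nz[OF A]) simp
  have E: "E \<noteq> 0" unfolding E_def by (rule DD_nz[OF A])
  have e1: "DD a n n = E / Y" using DD_Suc_n[of a n n] Y by (simp add: E_def Y_def field_simps)
  have e2: "DD a n (Suc n) = E / X" using DD_Suc_k[of a n n] X by (simp add: E_def X_def N1_def field_simps)
  define fn where "fn = (fact n :: complex)"
  define f2n where "f2n = (fact (2*n) :: complex)"
  define F1 where "F1 = (fact (Suc n) :: complex)"
  define F2 where "F2 = (fact (2 * Suc n) :: complex)"
  define M where "M = (of_nat (2*n+1) :: complex)"
  define T where "T = (of_nat (3*n+2) :: complex)"
  define s where "s = ((-1)^n :: complex)"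
  have nz: "fn \<noteq> 0" "f2n \<noteq> 0" "F1 \<noteq> 0" "F2 \<noteq> 0" "M \<noteq> 0" "N1 \<noteq> 0"
    unfolding fn_def f2n_def F1_def F2_def M_def N1_def by (simp_all del: of_nat_add of_nat_Suc fact_Suc)
  have r1: "(fact (n+n) :: complex) = f2n" unfolding f2n_def by (simp add: mult_2)
  have r2: "(of_nat (2*n+n+2) :: complex) = T" unfolding T_def by simp
  have r3: "(fact (n+1) :: complex) = N1 * fn" unfolding N1_def fn_def by (simp del: of_nat_add of_nat_Suc)
  have r4: "(fact (n + Suc n) :: complex) = M * f2n" unfolding M_def f2n_def by (simp add: mult_2 del: of_nat_add of_nat_Suc)
  have r5: "(fact (Suc n) :: complex) = N1 * fn" unfolding N1_def fn_def by (simp del: of_nat_add of_nat_Suc)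
  have r6: "(-1::complex) ^ Suc n = - s" unfolding s_def by simp
  have r7: "F2 = 2 * N1 * M * f2n"
  proof -
    have "2 * Suc n = Suc (Suc (2*n))" by simp
    then have "F2 = of_nat (Suc (Suc (2*n))) * (of_nat (Suc (2*n)) * fact (2*n))"
      unfolding F2_def by (simp only: fact_Suc)
    moreover have "(of_nat (Suc (Suc (2*n))) :: complex) = 2 * N1" unfolding N1_def by simp
    moreover have "(of_nat (Suc (2*n)) :: complex) = M" unfolding M_def by simp
    ultimately show ?thesis unfolding f2n_def by (simp only: mult.assoc)
  qed
  have r8: "2 * N1 - 1 = M" unfolding N1_def M_def by simp
  have r9: "(-1::complex) ^ (Suc n - 1) = s" unfolding s_def by simp
  define c where "c = s * f2n / (2 * E)"
  have f: "FF a n n = c * (T * Y / N1)"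
    unfolding FF_def c_def e1 r1 r2 r3 s_def[symmetric] fn_def[symmetric] using X Y E nz
    by (simp add: field_simps)
  have g: "GG a n (Suc n) = c * (- M * X / N1)"
    unfolding GG_def c_def e2 r4 r5 r6 fn_def[symmetric] using X Y E nz
    by (simp add: field_simps)
  have bin: "(of_nat ((2 * Suc n) choose (Suc n)) :: complex) = F2 / (F1 * F1)"
    unfolding F1_def F2_def by (subst binomial_fact) (simp_all add: mult_2 del: fact_Suc)
  have pq: "(\<Prod>j = 1..Suc n. (1 - a ^ 2 / (of_nat (Suc n + j)) ^ 2)) = (E / X) / (F2 / F1)^2"
    using prodquot[OF A, of n] unfolding e2 F1_def F2_def .
  have r: "1/4 * ((-1) ^ (Suc n - 1) * P /
            (N1 * (2 * N1 - 1) * X * of_nat ((2 * Suc n) choose (Suc n))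
             * (\<Prod>j = 1..Suc n. (1 - a ^ 2 / (of_nat (Suc n + j)) ^ 2)))) = c * P"
    unfolding pq bin r8 r9 c_def using X E nz unfolding r7
    by (simp add: field_simps power2_eq_square)
  have key: "T * Y - M * X = N1 * P"
    unfolding X_def Y_def P_def T_def M_def N1_def by (simp add: power2_eq_square algebra_simps)
  have "FF a n n + GG a n (Suc n) = c * ((T * Y - M * X) / N1)"
    unfolding f g by (simp add: diff_divide_distrib distrib_left right_diff_distrib)
  also have "\<dots> = c * P" unfolding key using nz by simp
  finally have fin: "FF a n n + GG a n (Suc n) = c * P" .
  have r': "1/4 * ((-1) ^ (Suc n - 1) * (10 * of_nat (Suc n) ^ 2 - 3 * of_nat (Suc n) - a ^ 2) /
            (of_nat (Suc n) * (2 * of_nat (Suc n) - 1) * (of_nat (Suc n) ^ 2 - a ^ 2) * of_nat ((2 * Suc n) choose (Suc n))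
             * (\<Prod>j = 1..Suc n. (1 - a ^ 2 / (of_nat (Suc n + j)) ^ 2)))) = c * P"
    using r unfolding X_def P_def N1_def .
  show ?thesis unfolding fin r' ..
qed


lemma fact_bound: "n \<le> m \<Longrightarrow> 2^n * fact n * fact m \<le> (fact (n+m) :: nat)"
proof (induction n)
  case 0 then show ?case by simp
next
  case (Suc n)
  then have IH: "2^n * fact n * fact m \<le> (fact (n+m) :: nat)" by simp
  have "2^(Suc n) * fact (Suc n) * fact m = (2 * (n+1)) * (2^n * fact n * fact m)" by (simp add: algebra_simps)
  also have "\<dots> \<le> (Suc (n+m)) * fact (n+m)"
    using IH Suc.prems by (intro mult_mono) auto
  also have "\<dots> = fact (Suc n + m)" by simp
  finally show ?case .
qed

lemma fact_bound_real: "n \<le> m \<Longrightarrow> (fact n * fact m / fact (n+m) :: real) \<le> (1/2)^n"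
proof -
  assume "n \<le> m"
  from fact_bound[OF this] have "real (2^n * fact n * fact m) \<le> real (fact (n+m))" by (simp only: of_nat_le_iff)
  then have "2^n * (fact n * fact m) \<le> (fact (n+m) :: real)" by (simp add: algebra_simps)
  moreover have "(fact (n+m) :: real) > 0" by simp
  ultimately show ?thesis by (simp add: field_simps power_divide)
qed

lemma factor_bound:
  assumes "real j ^ 2 \<ge> 3 * norm a ^ 2"
  shows "norm ((of_nat j :: complex)^2 - a^2) \<ge> 2/3 * real j ^ 2"
proof -
  have "norm ((of_nat j :: complex)^2) - norm (a^2) \<le> norm ((of_nat j :: complex)^2 - a^2)"
    by (rule norm_triangle_ineq2)
  moreover have "norm ((of_nat j :: complex)^2) = real j ^ 2" by (simp add: norm_power)
  moreover have "norm (a^2) = norm a ^ 2" by (simp add: norm_power)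
  ultimately show ?thesis using assms by linarith
qed

lemma prodfact_real: "fact k * (\<Prod>i<m. real (k+1+i)) = fact (k+m)"
proof (induction m)
  case 0 then show ?case by simp
next
  case (Suc m)
  have "fact k * (\<Prod>i<Suc m. real (k+1+i)) = (fact k * (\<Prod>i<m. real (k+1+i))) * real (k+1+m)"
    by (simp only: prod.lessThan_Suc mult.assoc)
  also have "\<dots> = fact (k+m) * real (Suc (k+m))" using Suc.IH by simp
  also have "\<dots> = fact (k + Suc m)" by (simp add: fact_Suc)
  finally show ?case .
qed

lemma DD_bound:
  assumes "real (k+1) ^ 2 \<ge> 3 * norm a ^ 2"
  shows "norm (DD a n k) \<ge> (2/3)^(Suc n) * (\<Prod>i<Suc n. real (k+1+i))^2"
proof -
  have "(2/3)^(Suc n) * (\<Prod>i<Suc n. real (k+1+i))^2 = (\<Prod>i<Suc n. 2/3 * real (k+1+i) ^ 2)"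
  proof -
    have "(\<Prod>i<Suc n. 2/3 * real (k+1+i) ^ 2) = (\<Prod>i<Suc n. (2/3::real)) * (\<Prod>i<Suc n. real (k+1+i))^2"
      by (simp only: prod.distrib prod_power_distrib)
    then show ?thesis by (simp only: prod_constant card_lessThan)
  qed
  also have "\<dots> \<le> (\<Prod>i<Suc n. norm ((of_nat (k+1+i) :: complex)^2 - a^2))"
  proof (rule prod_mono, safe)
    fix i
    show "0 \<le> 2/3 * real (k+1+i) ^ 2" by simp
    have "real (k+1) ^ 2 \<le> real (k+1+i) ^ 2" by (intro power_mono) auto
    then show "2/3 * real (k+1+i) ^ 2 \<le> norm ((of_nat (k+1+i) :: complex)^2 - a^2)"
      using assms by (intro factor_bound) linarith
  qed
  also have "\<dots> = norm (DD a n k)" unfolding DD_def by (rule prod_norm)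
  finally show ?thesis .
qed

lemma GG_bound:
  assumes A: "\<forall>k::int. k \<noteq> 0 \<longrightarrow> a \<noteq> of_int k"
    and B: "real (k+1) ^ 2 \<ge> 3 * norm a ^ 2"
  shows "norm (GG a n k) \<le> (3/2)^(Suc n) * (fact n * fact k / fact (n+k)) / (2 * real (n+k+1)^2)"
proof -
  define R where "R = (\<Prod>i<Suc n. real (k+1+i))"
  have R: "R > 0" unfolding R_def by (intro prod_pos) auto
  have Rf: "fact k * R = real (n+k+1) * fact (n+k)"
    unfolding R_def prodfact_real by (simp add: algebra_simps)
  have nD: "norm (DD a n k) \<ge> (2/3)^(Suc n) * R^2" unfolding R_def by (rule DD_bound[OF B])
  have pos: "(2/3)^(Suc n) * R^2 > 0" using R by simp
  have "norm (GG a n k) = fact n * fact (n+k) / (2 * fact k * norm (DD a n k))"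
    unfolding GG_def by (simp add: norm_divide norm_mult norm_power)
  also have "\<dots> \<le> fact n * fact (n+k) / (2 * fact k * ((2/3)^(Suc n) * R^2))"
    using nD pos by (intro divide_left_mono mult_left_mono mult_pos_pos) auto
  also have "\<dots> = (3/2)^(Suc n) * (fact n * fact k / fact (n+k)) / (2 * real (n+k+1)^2)"
  proof -
    define fk where "fk = (fact k :: real)"
    define fnk where "fnk = (fact (n+k) :: real)"
    define fn where "fn = (fact n :: real)"
    define N where "N = real (n+k+1)"
    define q where "q = (2/3::real)^(Suc n)"
    have nz: "fk > 0" "fnk > 0" "fn > 0" "N > 0" "q > 0" unfolding fk_def fnk_def fn_def N_def q_def by auto
    have q: "(3/2::real)^(Suc n) = 1 / q" unfolding q_def by (simp add: power_divide)
    have RR: "R = N * fnk / fk" using Rf nz unfolding fk_def[symmetric] fnk_def[symmetric] N_def[symmetric]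
      by (simp add: field_simps)
    show ?thesis unfolding q fk_def[symmetric] fnk_def[symmetric] fn_def[symmetric] N_def[symmetric] q_def[symmetric] RR
      using nz by (simp add: field_simps power2_eq_square)
  qed
  finally show ?thesis .
qed

lemma FF_GG: "FF a n k = GG a n k * of_nat (2*k+n+2) / of_nat (k+1)"
proof -
  have "(fact (k+1) :: complex) = of_nat (k+1) * fact k" by (simp del: of_nat_Suc)
  then show ?thesis unfolding FF_def GG_def by (simp add: field_simps del: of_nat_Suc fact_Suc)
qed


lemma FF0:
  assumes A: "\<forall>k::int. k \<noteq> 0 \<longrightarrow> a \<noteq> of_int k"
  shows "FF a 0 k = (-1)^k / ((of_nat (Suc k))^2 - a^2)"
proof -
  define X where "X = (of_nat (Suc k) :: complex)^2 - a^2"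
  define K1 where "K1 = (of_nat (Suc k) :: complex)"
  define fk where "fk = (fact k :: complex)"
  have X: "X \<noteq> 0" unfolding X_def by (rule factor_nz[OF A]) simp
  have nz: "K1 \<noteq> 0" "fk \<noteq> 0" unfolding K1_def fk_def by (simp_all del: of_nat_Suc)
  have d: "DD a 0 k = X" unfolding DD_def X_def by simp
  have f1: "(fact (k+1) :: complex) = K1 * fk" unfolding K1_def fk_def by (simp del: of_nat_Suc)
  have f2: "(of_nat (2*k+0+2) :: complex) = 2 * K1" unfolding K1_def by simp
  show ?thesis unfolding FF_def d f1 f2 fk_def[symmetric] X_def[symmetric] using X nz
    by (simp add: field_simps) (simp add: fk_def)
qed

lemma finite_id:
  assumes A: "\<forall>k::int. k \<noteq> 0 \<longrightarrow> a \<noteq> of_int k"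
  shows "(\<Sum>k\<le>K. FF a 0 k) = FF a K K + (\<Sum>n<K. (FF a n n + GG a n (Suc n)) - GG a n (Suc K))"
proof -
  have "\<forall>N. N \<le> K \<longrightarrow> (\<Sum>k\<in>{0..K}. FF a 0 k) = (\<Sum>k\<in>{N..K}. FF a N k) + (\<Sum>n<N. (FF a n n + GG a n (Suc n)) - GG a n (Suc K))"
  proof (intro allI impI)
    fix N assume "N \<le> K" then show "(\<Sum>k\<in>{0..K}. FF a 0 k) = (\<Sum>k\<in>{N..K}. FF a N k) + (\<Sum>n<N. (FF a n n + GG a n (Suc n)) - GG a n (Suc K))"
    proof (induction N)
      case 0 then show ?case by simp
    next
      case (Suc N)
      then have NK: "N \<le> K" "Suc N \<le> K" by auto
      have s1: "(\<Sum>k\<in>{N..K}. FF a N k) = FF a N N + (\<Sum>k\<in>{Suc N..K}. FF a N k)"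
        using NK by (simp add: sum.atLeast_Suc_atMost)
      have "(\<Sum>k\<in>{Suc N..K}. FF a (Suc N) k) - (\<Sum>k\<in>{Suc N..K}. FF a N k)
            = (\<Sum>k\<in>{Suc N..K}. GG a N (Suc k) - GG a N k)"
        by (simp add: sum_subtractf[symmetric] WZ[OF A])
      also have "\<dots> = GG a N (Suc K) - GG a N (Suc N)" using NK by (intro sum_Suc_diff) simp
      finally have s2: "(\<Sum>k\<in>{Suc N..K}. FF a N k) = (\<Sum>k\<in>{Suc N..K}. FF a (Suc N) k) - GG a N (Suc K) + GG a N (Suc N)"
        by (simp add: algebra_simps)
      show ?case using Suc.IH[OF NK(1)] s1 s2 by simp
    qed
  qed
  from this[rule_format, of K] show ?thesis by (simp add: atLeast0AtMost)
qed

lemma eventually_big: "eventually (\<lambda>K. 3 * norm a ^ 2 \<le> real (K+1) ^ 2) sequentially"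
proof -
  obtain K0 :: nat where K0: "2 * norm a \<le> real K0" using real_arch_simple by blast
  show ?thesis unfolding eventually_sequentially
  proof (intro exI allI impI)
    fix K assume "K0 \<le> K"
    then have "2 * norm a \<le> real (K+1)" using K0 by simp
    then have "(2 * norm a)^2 \<le> real (K+1) ^ 2" by (intro power_mono) auto
    moreover have "(2 * norm a)^2 = 4 * norm a ^ 2" by (simp add: power_mult_distrib)
    ultimately show "3 * norm a ^ 2 \<le> real (K+1) ^ 2" using zero_le_power2[of "norm a"] by linarith
  qed
qed

lemma summable_FF0:
  assumes A: "\<forall>k::int. k \<noteq> 0 \<longrightarrow> a \<noteq> of_int k"
  shows "summable (\<lambda>k. FF a 0 k)"
proof -
  obtain K0 where K0: "\<And>K. K \<ge> K0 \<Longrightarrow> 3 * norm a ^ 2 \<le> real (K+1) ^ 2"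
    using eventually_big[of a] unfolding eventually_sequentially by blast
  have sm: "summable (\<lambda>k. 3/2 * inverse (real (Suc k) ^ 2))"
  proof -
    have "summable (\<lambda>n. inverse (real n ^ 2))" using inverse_power_summable[of 2, where 'a=real] by simp
    then have "summable (\<lambda>n. inverse (real (Suc n) ^ 2))"
      using summable_Suc_iff[of "\<lambda>n. inverse (real n ^ 2)"] by simp
    then show ?thesis by (rule summable_mult)
  qed
  show ?thesis
  proof (rule summable_comparison_test'[OF sm])
    fix k assume "k \<ge> K0"
    then have B: "3 * norm a ^ 2 \<le> real (k+1) ^ 2" by (rule K0)
    have g: "norm (GG a 0 k) \<le> (3/2)^(Suc 0) * (fact 0 * fact k / fact (0+k)) / (2 * real (0+k+1)^2)"
      by (rule GG_bound[OF A B])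
    have "norm (FF a 0 k) = norm (GG a 0 k) * 2"
      unfolding FF_GG by (simp add: norm_mult norm_divide del: of_nat_Suc) (simp add: field_simps)
    also have "\<dots> \<le> 3/2 * inverse (real (Suc k) ^ 2)" using g by (simp add: field_simps)
    finally show "norm (FF a 0 k) \<le> 3/2 * inverse (real (Suc k) ^ 2)" .
  qed
qed

lemma FF_diag_zero:
  assumes A: "\<forall>k::int. k \<noteq> 0 \<longrightarrow> a \<noteq> of_int k"
  shows "(\<lambda>K. FF a K K) \<longlonglongrightarrow> 0"
proof (rule Lim_null_comparison)
  show "(\<lambda>K. 9/2 * (3/4::real)^K) \<longlonglongrightarrow> 0"
    by (intro tendsto_mult_right_zero LIMSEQ_power_zero) simp
  show "eventually (\<lambda>K. norm (FF a K K) \<le> 9/2 * (3/4)^K) sequentially"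
    using eventually_big[of a]
  proof eventually_elim
    case (elim K)
    have g: "norm (GG a K K) \<le> (3/2)^(Suc K) * (fact K * fact K / fact (K+K)) / (2 * real (K+K+1)^2)"
      by (rule GG_bound[OF A elim])
    have fb: "fact K * fact K / fact (K+K) \<le> ((1/2)^K :: real)" by (rule fact_bound_real) simp
    have h: "(1::real) \<le> real (K+K+1)" by simp
    have "1 \<le> real (K+K+1)^2" using h by (metis one_le_power)
    then have one: "1 \<le> 2 * real (K+K+1)^2" by linarith
    have "(3/2)^(Suc K) * (fact K * fact K / fact (K+K)) / (2 * real (K+K+1)^2) \<le> (3/2)^(Suc K) * (fact K * fact K / fact (K+K))"
    proof -
      have nn: "(0::real) \<le> (3/2)^(Suc K) * (fact K * fact K / fact (K+K))" by simp
      have "(3/2)^(Suc K) * (fact K * fact K / fact (K+K)) / (2 * real (K+K+1)^2) \<le> (3/2)^(Suc K) * (fact K * fact K / fact (K+K)) / 1"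
        using one nn by (intro divide_left_mono) auto
      then show ?thesis by simp
    qed
    also have "\<dots> \<le> (3/2)^(Suc K) * (1/2)^K" using fb by (intro mult_left_mono) auto
    also have "\<dots> = 3/2 * (3/4::real)^K" by (simp add: power_mult_distrib[symmetric])
    finally have g2: "norm (GG a K K) \<le> 3/2 * (3/4::real)^K" using g by linarith
    have r: "real (2*K+K+2) / real (K+1) \<le> 3" by (simp add: field_simps)
    have "norm (FF a K K) = norm (GG a K K) * (real (2*K+K+2) / real (K+1))"
      unfolding FF_GG by (simp add: norm_mult norm_divide del: of_nat_Suc of_nat_add)
    also have "\<dots> \<le> (3/2 * (3/4::real)^K) * 3"
      using g2 r by (intro mult_mono) auto
    finally show ?case by simp
  qed
qed

lemma GG_tail_zero:
  assumes A: "\<forall>k::int. k \<noteq> 0 \<longrightarrow> a \<noteq> of_int k"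
  shows "(\<lambda>K. \<Sum>n<K. GG a n (Suc K)) \<longlonglongrightarrow> 0"
proof (rule Lim_null_comparison)
  show "(\<lambda>K. 6 * inverse (real (Suc K))) \<longlonglongrightarrow> 0"
    by (intro tendsto_mult_right_zero LIMSEQ_inverse_real_of_nat)
  show "eventually (\<lambda>K. norm (\<Sum>n<K. GG a n (Suc K)) \<le> 6 * inverse (real (Suc K))) sequentially"
    using eventually_big[of a]
  proof eventually_elim
    case (elim K)
    have B: "3 * norm a ^ 2 \<le> real (Suc K + 1) ^ 2"
      using elim by (smt (verit) of_nat_Suc of_nat_add power_mono of_nat_0_le_iff)
    have each: "norm (GG a n (Suc K)) \<le> 3/2 * (3/4::real)^n * inverse (real (Suc K))" if "n < K" for n
    proof -
      have g: "norm (GG a n (Suc K)) \<le> (3/2)^(Suc n) * (fact n * fact (Suc K) / fact (n + Suc K)) / (2 * real (n + Suc K + 1)^2)"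
        by (rule GG_bound[OF A B])
      have fb: "fact n * fact (Suc K) / fact (n + Suc K) \<le> ((1/2)^n :: real)" by (rule fact_bound_real) (use that in simp)
      have le: "real (Suc K) \<le> 2 * real (n + Suc K + 1)^2"
      proof -
        have "real (Suc K) \<le> real (n + Suc K + 1)" by simp
        also have "\<dots> \<le> real (n + Suc K + 1)^2" by (simp add: power2_eq_square)
        finally show ?thesis by simp
      qed
      have "(3/2)^(Suc n) * (fact n * fact (Suc K) / fact (n + Suc K)) / (2 * real (n + Suc K + 1)^2)
            \<le> (3/2)^(Suc n) * (1/2)^n / (2 * real (n + Suc K + 1)^2)"
        using fb by (intro divide_right_mono mult_left_mono) auto
      also have "\<dots> \<le> (3/2)^(Suc n) * (1/2)^n / real (Suc K)"
        using le by (intro divide_left_mono) auto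
      also have "\<dots> = 3/2 * (3/4::real)^n * inverse (real (Suc K))"
        by (simp add: power_mult_distrib[symmetric] field_simps)
      finally show ?thesis using g by linarith
    qed
    have "norm (\<Sum>n<K. GG a n (Suc K)) \<le> (\<Sum>n<K. norm (GG a n (Suc K)))" by (rule norm_sum)
    also have "\<dots> \<le> (\<Sum>n<K. 3/2 * (3/4::real)^n * inverse (real (Suc K)))"
      using each by (intro sum_mono) auto
    also have "\<dots> = 3/2 * inverse (real (Suc K)) * (\<Sum>n<K. (3/4::real)^n)"
      by (simp add: sum_distrib_left algebra_simps)
    also have "(\<Sum>n<K. (3/4::real)^n) \<le> 4"
      by (simp add: sum_gp_strict)
    then have "3/2 * inverse (real (Suc K)) * (\<Sum>n<K. (3/4::real)^n) \<le> 3/2 * inverse (real (Suc K)) * 4"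
      by (intro mult_left_mono) auto
    finally show ?case by simp
  qed
qed

lemma main_sums:
  assumes A: "\<forall>k::int. k \<noteq> 0 \<longrightarrow> a \<noteq> of_int k"
  shows "(\<lambda>n. FF a n n + GG a n (Suc n)) sums (\<Sum>k. FF a 0 k)"
proof -
  have eq: "(\<lambda>K. \<Sum>n<K. FF a n n + GG a n (Suc n)) = (\<lambda>K. (\<Sum>k\<le>K. FF a 0 k) - FF a K K + (\<Sum>n<K. GG a n (Suc K)))"
  proof
    fix K
    show "(\<Sum>n<K. FF a n n + GG a n (Suc n)) = (\<Sum>k\<le>K. FF a 0 k) - FF a K K + (\<Sum>n<K. GG a n (Suc K))"
      unfolding finite_id[OF A, of K] by (simp add: sum_subtractf)
  qed
  have "(\<lambda>K. (\<Sum>k\<le>K. FF a 0 k) - FF a K K + (\<Sum>n<K. GG a n (Suc K))) \<longlonglongrightarrow> (\<Sum>k. FF a 0 k) - 0 + 0"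
    by (intro tendsto_add tendsto_diff summable_LIMSEQ' summable_FF0[OF A] FF_diag_zero[OF A] GG_tail_zero[OF A])
  then show ?thesis unfolding sums_def eq by simp
qed


lemma summable_inv_sq: "summable (\<lambda>m. 1 / real (Suc m) ^ 2)"
proof -
  have "summable (\<lambda>n. inverse (real n ^ 2))" using inverse_power_summable[of 2, where 'a=real] by simp
  then have "summable (\<lambda>n. inverse (real (Suc n) ^ 2))"
    using summable_Suc_iff[of "\<lambda>n. inverse (real n ^ 2)"] by simp
  then show ?thesis by (simp add: divide_inverse)
qed

lemma alt_zeta: "(\<lambda>m. (-1)^m / real (Suc m) ^ 2) sums ((\<Sum>m. 1 / real (Suc m) ^ 2) / 2)"
proof -
  define b where "b = (\<lambda>m. 1 / real (Suc m) ^ 2)"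
  define z where "z = (\<Sum>m. 1 / real (Suc m) ^ 2)"
  have bs: "b sums z" unfolding b_def z_def using summable_inv_sq by (rule summable_sums)
  define h where "h = (\<lambda>m. if odd m then b m else 0)"
  have "(\<lambda>k. h (2*k+1)) = (\<lambda>k. 1/4 * b k)"
  proof
    fix k
    have "real (Suc (2*k+1)) = 2 * real (Suc k)" by simp
    then show "h (2*k+1) = 1/4 * b k" unfolding h_def b_def by (simp add: power2_eq_square algebra_simps)
  qed
  moreover have "(\<lambda>k. 1/4 * b k) sums (1/4 * z)" using bs by (rule sums_mult)
  ultimately have "(\<lambda>k. h (2*k+1)) sums (1/4 * z)" by simp
  moreover have "strict_mono (\<lambda>k::nat. 2*k+1)" by (rule strict_monoI) simp
  moreover have "h n = 0" if "n \<notin> range (\<lambda>k::nat. 2*k+1)" for n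
  proof -
    have "\<not> odd n"
    proof
      assume "odd n"
      then have "n = 2 * (n div 2) + 1" by simp
      then have "n \<in> range (\<lambda>k::nat. 2*k+1)" by blast
      with that show False by simp
    qed
    then show ?thesis unfolding h_def by simp
  qed
  ultimately have hs: "h sums (1/4 * z)" using sums_mono_reindex[of "\<lambda>k::nat. 2*k+1" h] by blast
  have "(\<lambda>m. b m - 2 * h m) sums (z - 2 * (1/4 * z))"
    by (intro sums_diff sums_mult bs hs)
  moreover have "(\<lambda>m. b m - 2 * h m) = (\<lambda>m. (-1)^m / real (Suc m) ^ 2)"
    unfolding h_def b_def by (auto simp: fun_eq_iff)
  ultimately show ?thesis unfolding z_def by simp
qed

lemma real_term:
  "complex_of_real (let n = Suc m in
            (-1) ^ (n - 1) * (10 * real n - 3) / (real n ^ 2 * (2 * real n - 1) * real ((2 * n) choose n)))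
   = (let n = Suc m in
            (-1) ^ (n - 1) * (10 * of_nat n ^ 2 - 3 * of_nat n - 0 ^ 2) /
            (of_nat n * (2 * of_nat n - 1) * (of_nat n ^ 2 - 0 ^ 2) * of_nat ((2 * n) choose n)
             * (\<Prod>j = 1..n. (1 - 0 ^ 2 / (of_nat (n + j)) ^ 2))))"
proof -
  define N where "N = (of_nat (Suc m) :: complex)"
  define C where "C = (of_nat ((2 * Suc m) choose (Suc m)) :: complex)"
  define W where "W = 2 * N - 1"
  define s where "s = ((-1)^m :: complex)"
  have "((2 * Suc m) choose (Suc m)) > 0" by (rule zero_less_binomial) simp
  then have nzC: "C \<noteq> 0" unfolding C_def by (simp only: of_nat_eq_0_iff)
  have WW: "W = of_nat (2*m+1)" unfolding W_def N_def by simp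
  have nz: "N \<noteq> 0" "C \<noteq> 0" "W \<noteq> 0" unfolding N_def WW using nzC by (simp_all del: of_nat_Suc)
  have l: "complex_of_real (let n = Suc m in
            (-1) ^ (n - 1) * (10 * real n - 3) / (real n ^ 2 * (2 * real n - 1) * real ((2 * n) choose n)))
        = s * (10 * N - 3) / (N^2 * W * C)"
    unfolding Let_def N_def C_def W_def s_def by (simp del: of_nat_Suc)
  have r: "(let n = Suc m in
            (-1) ^ (n - 1) * (10 * of_nat n ^ 2 - 3 * of_nat n - 0 ^ 2) /
            (of_nat n * (2 * of_nat n - 1) * (of_nat n ^ 2 - 0 ^ 2) * of_nat ((2 * n) choose n)
             * (\<Prod>j = 1..n. (1 - 0 ^ 2 / (of_nat (n + j)) ^ 2)))) = s * (10 * N^2 - 3 * N) / (N * W * N^2 * C)"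
    unfolding Let_def N_def C_def W_def s_def by (simp del: of_nat_Suc)
  show ?thesis unfolding l r using nz by (simp add: field_simps power2_eq_square)
qed

theorem corollary4:
  fixes a :: complex
  assumes "\<forall>k::int. k \<noteq> 0 \<longrightarrow> a \<noteq> of_int k"
  shows "summable (\<lambda>m. let n = Suc m in (-1) ^ (n - 1) / (of_nat n ^ 2 - a ^ 2))
       \<and> summable (\<lambda>m. let n = Suc m in
            (-1) ^ (n - 1) * (10 * of_nat n ^ 2 - 3 * of_nat n - a ^ 2) /
            (of_nat n * (2 * of_nat n - 1) * (of_nat n ^ 2 - a ^ 2) * of_nat ((2 * n) choose n)
             * (\<Prod>j = 1..n. (1 - a ^ 2 / (of_nat (n + j)) ^ 2))))
       \<and> (\<Sum>m. let n = Suc m in (-1) ^ (n - 1) / (of_nat n ^ 2 - a ^ 2))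
         = 1 / 4 * (\<Sum>m. let n = Suc m in
            (-1) ^ (n - 1) * (10 * of_nat n ^ 2 - 3 * of_nat n - a ^ 2) /
            (of_nat n * (2 * of_nat n - 1) * (of_nat n ^ 2 - a ^ 2) * of_nat ((2 * n) choose n)
             * (\<Prod>j = 1..n. (1 - a ^ 2 / (of_nat (n + j)) ^ 2))))
       \<and> summable (\<lambda>m. let n = Suc m in
            (-1) ^ (n - 1) * (10 * real n - 3) / (real n ^ 2 * (2 * real n - 1) * real ((2 * n) choose n)))
       \<and> (\<Sum>m. 1 / real (Suc m) ^ 2)
         = 1 / 2 * (\<Sum>m. let n = Suc m in
            (-1) ^ (n - 1) * (10 * real n - 3) / (real n ^ 2 * (2 * real n - 1) * real ((2 * n) choose n)))"
proof -
  have A: "\<forall>k::int. k \<noteq> 0 \<longrightarrow> a \<noteq> of_int k" by (rule assms)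
  have lhs_eq: "\<And>a. (\<forall>k::int. k \<noteq> 0 \<longrightarrow> a \<noteq> of_int k) \<Longrightarrow>
      (\<lambda>m. let n = Suc m in (-1) ^ (n - 1) / (of_nat n ^ 2 - a ^ 2)) = (\<lambda>m. FF a 0 m)"
    by (rule ext) (simp add: Let_def FF0)
  have rhs_eq: "\<And>a. (\<forall>k::int. k \<noteq> 0 \<longrightarrow> a \<noteq> of_int k) \<Longrightarrow>
      (\<lambda>m. let n = Suc m in
            (-1) ^ (n - 1) * (10 * of_nat n ^ 2 - 3 * of_nat n - a ^ 2) /
            (of_nat n * (2 * of_nat n - 1) * (of_nat n ^ 2 - a ^ 2) * of_nat ((2 * n) choose n)
             * (\<Prod>j = 1..n. (1 - a ^ 2 / (of_nat (n + j)) ^ 2)))) = (\<lambda>m. 4 * (FF a m m + GG a m (Suc m)))"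
  proof (rule ext)
    fix a :: complex and m
    assume "\<forall>k::int. k \<noteq> 0 \<longrightarrow> a \<noteq> of_int k"
    note d = diag[OF this, of m]
    show "(let n = Suc m in
            (-1) ^ (n - 1) * (10 * of_nat n ^ 2 - 3 * of_nat n - a ^ 2) /
            (of_nat n * (2 * of_nat n - 1) * (of_nat n ^ 2 - a ^ 2) * of_nat ((2 * n) choose n)
             * (\<Prod>j = 1..n. (1 - a ^ 2 / (of_nat (n + j)) ^ 2)))) = 4 * (FF a m m + GG a m (Suc m))"
      unfolding Let_def d by simp
  qed
  have S: "\<And>a. (\<forall>k::int. k \<noteq> 0 \<longrightarrow> a \<noteq> of_int k) \<Longrightarrow>
     (\<lambda>m. FF a 0 m) sums (\<Sum>k. FF a 0 k) \<and> (\<lambda>m. 4 * (FF a m m + GG a m (Suc m))) sums (4 * (\<Sum>k. FF a 0 k))"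
  proof -
    fix a :: complex
    assume h: "\<forall>k::int. k \<noteq> 0 \<longrightarrow> a \<noteq> of_int k"
    have "(\<lambda>m. FF a 0 m) sums (\<Sum>k. FF a 0 k)" by (rule summable_sums[OF summable_FF0[OF h]])
    moreover have "(\<lambda>m. 4 * (FF a m m + GG a m (Suc m))) sums (4 * (\<Sum>k. FF a 0 k))"
      by (rule sums_mult[OF main_sums[OF h]])
    ultimately show "(\<lambda>m. FF a 0 m) sums (\<Sum>k. FF a 0 k) \<and> (\<lambda>m. 4 * (FF a m m + GG a m (Suc m))) sums (4 * (\<Sum>k. FF a 0 k))" ..
  qed
  have c1: "(\<lambda>m. let n = Suc m in (-1) ^ (n - 1) / (of_nat n ^ 2 - a ^ 2)) sums (\<Sum>k. FF a 0 k)"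
    unfolding lhs_eq[OF A] using S[OF A] by blast
  have c2: "(\<lambda>m. let n = Suc m in
            (-1) ^ (n - 1) * (10 * of_nat n ^ 2 - 3 * of_nat n - a ^ 2) /
            (of_nat n * (2 * of_nat n - 1) * (of_nat n ^ 2 - a ^ 2) * of_nat ((2 * n) choose n)
             * (\<Prod>j = 1..n. (1 - a ^ 2 / (of_nat (n + j)) ^ 2)))) sums (4 * (\<Sum>k. FF a 0 k))"
    unfolding rhs_eq[OF A] using S[OF A] by blast
  have A0: "\<forall>k::int. k \<noteq> 0 \<longrightarrow> (0::complex) \<noteq> of_int k" by simp
  define z where "z = (\<Sum>m. 1 / real (Suc m) ^ 2)"
  define R where "R = (\<lambda>m. let n = Suc m in
            (-1) ^ (n - 1) * (10 * real n - 3) / (real n ^ 2 * (2 * real n - 1) * real ((2 * n) choose n)))"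
  have FF00: "(\<lambda>m. FF 0 0 m) = (\<lambda>m. complex_of_real ((-1)^m / real (Suc m) ^ 2))"
    by (rule ext) (simp add: FF0[OF A0])
  have "(\<lambda>m. complex_of_real ((-1)^m / real (Suc m) ^ 2)) sums complex_of_real (z/2)"
    unfolding z_def by (rule sums_of_real[OF alt_zeta])
  then have L0: "(\<Sum>k. FF 0 0 k) = complex_of_real (z/2)"
  proof -
    have "(\<lambda>m. FF 0 0 m) sums (\<Sum>k. FF 0 0 k)" using S[OF A0] by (rule conjunct1)
    then have "(\<lambda>m. complex_of_real ((-1)^m / real (Suc m) ^ 2)) sums (\<Sum>k. FF 0 0 k)" unfolding FF00 .
    then show ?thesis using \<open>(\<lambda>m. complex_of_real ((-1)^m / real (Suc m) ^ 2)) sums complex_of_real (z/2)\<close>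
      by (rule sums_unique2)
  qed
  have "(\<lambda>m. complex_of_real (R m)) = (\<lambda>m. 4 * (FF 0 m m + GG 0 m (Suc m)))"
    unfolding R_def real_term rhs_eq[OF A0, symmetric] ..
  then have "(\<lambda>m. complex_of_real (R m)) sums complex_of_real (2 * z)"
    using S[OF A0] unfolding L0 by simp
  then have Rs: "R sums (2 * z)" by (simp only: sums_of_real_iff)
  have sR: "summable R" using Rs by (rule sums_summable)
  have uR: "suminf R = 2 * z" using Rs by (rule sums_unique[symmetric])
  have s1: "summable (\<lambda>m. let n = Suc m in (-1) ^ (n - 1) / (of_nat n ^ 2 - a ^ 2))" using c1 by (rule sums_summable)
  have s2: "summable (\<lambda>m. let n = Suc m in
            (-1) ^ (n - 1) * (10 * of_nat n ^ 2 - 3 * of_nat n - a ^ 2) /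
            (of_nat n * (2 * of_nat n - 1) * (of_nat n ^ 2 - a ^ 2) * of_nat ((2 * n) choose n)
             * (\<Prod>j = 1..n. (1 - a ^ 2 / (of_nat (n + j)) ^ 2))))" using c2 by (rule sums_summable)
  show ?thesis
    unfolding R_def[symmetric] z_def[symmetric] sums_unique[OF c1, symmetric] sums_unique[OF c2, symmetric] uR
    using s1 s2 sR by (intro conjI) simp_all

qed

end
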